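(* Let $W_S(\theta_0,s)=\int_{\theta_0}^{\bar\theta}\big(\theta s(\theta)+v(\theta)\big)dF(\theta)$ for $\theta_0\in[0,\bar\theta)$ and $s\in\mathcal S(\theta_0)$ (social welfare with equal weights on revenue and consumer surplus, $\lambda=1$). Then $W_S$ is maximized over all such $(\theta_0,s)$ by $\theta_0=0$ and $s=F$ (full separation without exclusion).
   Context: Let $0<\bar\theta<\infty$, $\Theta=[0,\bar\theta]$, $F$ a cdf on $\Theta$ with continuous, strictly positive density $f$, $dF=f\,d\theta$. The intrinsic value $v:\Theta\to[0,\infty)$ is twice continuously differentiable with $v'\ge0$, $v''\le0$. For $\theta_0\in[0,\bar\theta)$ and bounded measurable $a,b$ on $[\theta_0,\bar\theta]$, write $b\in\mathrm{MPS}(a)$ if $\int_x^{\bar\theta}b\,dF\le\int_x^{\bar\theta}a\,dF$ for all $x\in[\theta_0,\bar\theta]$, with equality at $x=\theta_0$. $\mathcal S(\theta_0)$ is the set of nondecreasing $s:[\theta_0,\bar\theta]\to[0,1]$ with $s\in\mathrm{MPS}(F)$ on $[\theta_0,\bar\theta]$. *)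

theory Defs
  imports "HOL-Analysis.Analysis"
begin

text \<open>Integrals w.r.t. dF with dF = f d\<theta> are written as Henstock-Kurzweil integrals
  of the integrand times the density f.\<close>

definition MPS :: "real \<Rightarrow> (real \<Rightarrow> real) \<Rightarrow> real \<Rightarrow> (real \<Rightarrow> real) \<Rightarrow> (real \<Rightarrow> real) \<Rightarrow> bool" where
  "MPS thbar f th0 b a \<longleftrightarrow>
     bounded (a ` {th0..thbar}) \<and> bounded (b ` {th0..thbar}) \<and>
     a \<in> borel_measurable (lebesgue_on {th0..thbar}) \<and>
     b \<in> borel_measurable (lebesgue_on {th0..thbar}) \<and>
     (\<forall>x\<in>{th0..thbar}. integral {x..thbar} (\<lambda>t. b t * f t) \<le> integral {x..thbar} (\<lambda>t. a t * f t)) \<and>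
     integral {th0..thbar} (\<lambda>t. b t * f t) = integral {th0..thbar} (\<lambda>t. a t * f t)"

definition Sset :: "real \<Rightarrow> (real \<Rightarrow> real) \<Rightarrow> (real \<Rightarrow> real) \<Rightarrow> real \<Rightarrow> (real \<Rightarrow> real) set" where
  "Sset thbar f F th0 = {s. mono_on {th0..thbar} s \<and> (\<forall>t\<in>{th0..thbar}. 0 \<le> s t \<and> s t \<le> 1)
                             \<and> MPS thbar f th0 s F}"

definition WS :: "real \<Rightarrow> (real \<Rightarrow> real) \<Rightarrow> (real \<Rightarrow> real) \<Rightarrow> real \<Rightarrow> (real \<Rightarrow> real) \<Rightarrow> real" where
  "WS thbar f v th0 s = integral {th0..thbar} (\<lambda>t. (t * s t + v t) * f t)"

end

theory Submission
  imports Defs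
begin

lemma int_abs_bound:
  fixes k :: "real \<Rightarrow> real"
  assumes "x \<le> y" "k integrable_on {x..y}" "\<And>t. t \<in> {x..y} \<Longrightarrow> \<bar>k t\<bar> \<le> B"
  shows "\<bar>integral {x..y} k\<bar> \<le> B * (y - x)"
proof -
  have "integral {x..y} k \<le> integral {x..y} (\<lambda>_. B)"
    by (rule integral_le) (use assms in \<open>auto simp: abs_le_iff\<close>)
  moreover have "integral {x..y} (\<lambda>_. -B) \<le> integral {x..y} k"
  proof (rule integral_le)
    show "-B \<le> k t" if "t \<in> {x..y}" for t using assms(3)[OF that] by linarith
  qed (use assms in auto)
  ultimately show ?thesis using assms(1) by (auto simp: content_real algebra_simps)
qed

lemma small_zero:
  fixes z c :: real
  assumes "0 \<le> c" "\<And>n::nat. (0::nat) < n \<Longrightarrow> \<bar>z\<bar> \<le> c / n"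
  shows "z = 0"
proof (rule ccontr)
  assume "z \<noteq> 0"
  then have zp: "\<bar>z\<bar> > 0" by simp
  obtain n :: nat where n: "c / \<bar>z\<bar> < n" using reals_Archimedean2 by blast
  have "0 \<le> c / \<bar>z\<bar>" using assms(1) zp by simp
  then have np: "n > 0" using n by linarith
  have "c < \<bar>z\<bar> * n" using n zp by (simp add: field_simps)
  then have "c / n < \<bar>z\<bar>" using np by (simp add: field_simps)
  with assms(2)[OF np] show False by linarith
qed

lemma core:
  fixes h :: "real \<Rightarrow> real"
  assumes ab: "a \<le> b" and hint: "h integrable_on {a..b}"
    and thint: "(\<lambda>t. t * h t) integrable_on {a..b}"
    and hb: "\<And>t. t \<in> {a..b} \<Longrightarrow> \<bar>h t\<bar> \<le> M"
    and tail: "\<And>x. x \<in> {a..b} \<Longrightarrow> integral {x..b} h \<le> 0"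
    and tot: "integral {a..b} h = 0"
  shows "integral {a..b} (\<lambda>t. t * h t) \<le> 0"
proof -
  define g where "g x = integral {x..b} h" for x
  have M0: "0 \<le> M" using hb[of a] ab by auto
  have hsub: "h integrable_on {x..y}" if "a \<le> x" "y \<le> b" for x y
    using integrable_on_subinterval[OF hint] that by auto
  have thsub: "(\<lambda>t. t * h t) integrable_on {x..y}" if "a \<le> x" "y \<le> b" for x y
    using integrable_on_subinterval[OF thint] that by auto
  have gcont: "continuous_on {a..b} g"
    unfolding g_def by (rule indefinite_integral_continuous_1'[OF hint])
  have gint: "g integrable_on {a..b}" by (rule integrable_continuous_interval[OF gcont])
  have gsub: "g integrable_on {x..y}" if "a \<le> x" "y \<le> b" for x y
    using integrable_on_subinterval[OF gint] that by auto
  have gsplit: "g x = integral {x..y} h + g y" if "a \<le> x" "x \<le> y" "y \<le> b" for x y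
    unfolding g_def using Henstock_Kurzweil_Integration.integral_combine[OF that(2) _ hsub[of x b]] that by auto
  have gbound: "\<bar>g t - g y\<bar> \<le> M * (y - x)" if "a \<le> x" "x \<le> t" "t \<le> y" "y \<le> b" for x y t
  proof -
    have "\<bar>integral {t..y} h\<bar> \<le> M * (y - t)"
      by (rule int_abs_bound) (use that hb hsub in auto)
    moreover have "M * (y - t) \<le> M * (y - x)" using M0 that by (intro mult_left_mono) auto
    ultimately show ?thesis using gsplit[of t y] that by auto
  qed
  define D where "D x = integral {x..b} (\<lambda>t. t * h t) - x * g x - integral {x..b} g" for x
  have key: "\<bar>D x - D y\<bar> \<le> 2 * M * (y - x)^2" if xy: "a \<le> x" "x \<le> y" "y \<le> b" for x y
  proof -
    have e1: "integral {x..b} (\<lambda>t. t * h t) = integral {x..y} (\<lambda>t. t * h t) + integral {y..b} (\<lambda>t. t * h t)"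
      using Henstock_Kurzweil_Integration.integral_combine[OF xy(2) _ thsub[of x b]] xy by auto
    have e3: "integral {x..b} g = integral {x..y} g + integral {y..b} g"
      using Henstock_Kurzweil_Integration.integral_combine[OF xy(2) _ gsub[of x b]] xy by auto
    have e2: "g x = integral {x..y} h + g y" using gsplit xy by auto
    have i1: "integral {x..y} (\<lambda>t. (t - x) * h t) = integral {x..y} (\<lambda>t. t * h t) - x * integral {x..y} h"
    proof -
      have "integral {x..y} (\<lambda>t. (t - x) * h t) = integral {x..y} (\<lambda>t. t * h t - x * h t)"
        by (simp add: algebra_simps)
      also have "\<dots> = integral {x..y} (\<lambda>t. t * h t) - integral {x..y} (\<lambda>t. x * h t)"
        using thsub[of x y] integrable_on_cmult_left[OF hsub[of x y], of x] xy
        by (intro integral_diff) (auto simp: mult.commute)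
      finally show ?thesis by simp
    qed
    have i2: "integral {x..y} (\<lambda>t. g y - g t) = (y - x) * g y - integral {x..y} g"
    proof -
      have "integral {x..y} (\<lambda>t. g y - g t) = integral {x..y} (\<lambda>t. g y) - integral {x..y} g"
        by (rule integral_diff) (use gsub xy in auto)
      then show ?thesis using xy by (simp add: content_real)
    qed
    have "D x - D y = integral {x..y} (\<lambda>t. (t - x) * h t) + integral {x..y} (\<lambda>t. g y - g t)"
      unfolding D_def i1 i2 e1 e3 e2 by (simp add: algebra_simps)
    moreover have "\<bar>integral {x..y} (\<lambda>t. (t - x) * h t)\<bar> \<le> (M * (y - x)) * (y - x)"
    proof (rule int_abs_bound)
      show "(\<lambda>t. (t - x) * h t) integrable_on {x..y}"
        using i1 integrable_diff[OF thsub[of x y] integrable_cmul[OF hsub[of x y], of x]] xy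
        by (simp add: algebra_simps left_diff_distrib)
      fix t assume t: "t \<in> {x..y}"
      have "\<bar>(t - x) * h t\<bar> = (t - x) * \<bar>h t\<bar>" using t by (simp add: abs_mult)
      also have "\<dots> \<le> (y - x) * M" using t xy hb[of t] M0 by (intro mult_mono) auto
      finally show "\<bar>(t - x) * h t\<bar> \<le> M * (y - x)" by (simp add: mult.commute)
    qed (use xy in auto)
    moreover have "\<bar>integral {x..y} (\<lambda>t. g y - g t)\<bar> \<le> (M * (y - x)) * (y - x)"
    proof (rule int_abs_bound)
      show "(\<lambda>t. g y - g t) integrable_on {x..y}"
        using gsub[of x y] xy by (intro integrable_diff) auto
      fix t assume t: "t \<in> {x..y}"
      show "\<bar>g y - g t\<bar> \<le> M * (y - x)" using gbound[of x t y] t xy by (simp add: abs_minus_commute)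
    qed (use xy in auto)
    ultimately show ?thesis by (simp add: power2_eq_square algebra_simps)
  qed
  have Db: "D b = 0" unfolding D_def g_def by simp
  have "D a = 0"
  proof (rule small_zero)
    show "0 \<le> 2 * M * (b - a)^2" using M0 by simp
    fix n :: nat assume n: "n > 0"
    define d where "d = (b - a) / n"
    have d0: "0 \<le> d" using ab n by (simp add: d_def)
    have ind: "k \<le> n \<Longrightarrow> \<bar>D a - D (a + k * d)\<bar> \<le> k * (2 * M * d^2)" for k :: nat
    proof (induction k)
      case 0 then show ?case by simp
    next
      case (Suc k)
      have "real (Suc k) * d \<le> n * d" using Suc.prems d0 by (intro mult_right_mono) auto
      also have "n * d = b - a" using n by (simp add: d_def)
      finally have le: "a + real (Suc k) * d \<le> b" by simp
      have "\<bar>D (a + k * d) - D (a + real (Suc k) * d)\<bar> \<le> 2 * M * ((a + real (Suc k) * d) - (a + k * d))^2"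
        by (rule key) (use le d0 in \<open>auto simp: algebra_simps\<close>)
      also have "\<dots> = 2 * M * d^2" by (simp add: algebra_simps)
      finally have "\<bar>D (a + k * d) - D (a + real (Suc k) * d)\<bar> \<le> 2 * M * d^2" .
      with Suc show ?case by (simp add: algebra_simps)
    qed
    have "a + real n * d = b" using n by (simp add: d_def)
    with ind[of n] Db have "\<bar>D a\<bar> \<le> n * (2 * M * d^2)" by simp
    also have "\<dots> = 2 * M * (b - a)^2 / n" using n by (simp add: d_def power2_eq_square field_simps)
    finally show "\<bar>D a\<bar> \<le> 2 * M * (b - a)^2 / n" .
  qed
  moreover have "g a = 0" using tot g_def by simp
  moreover have "integral {a..b} g \<le> 0"
  proof -
    have "integral {a..b} g \<le> integral {a..b} (\<lambda>_. 0::real)"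
      by (rule integral_le) (use gint tail g_def in auto)
    then show ?thesis by simp
  qed
  ultimately show ?thesis unfolding D_def by simp
qed


theorem corollary2:
  fixes thbar :: real and f F v v' v'' :: "real \<Rightarrow> real"
  assumes thbar_pos: "0 < thbar"
    and f_cont: "continuous_on {0..thbar} f"
    and f_pos: "\<And>t. t \<in> {0..thbar} \<Longrightarrow> 0 < f t"
    and F_def: "\<And>x. x \<in> {0..thbar} \<Longrightarrow> F x = integral {0..x} f"
    and F_top: "F thbar = 1"
    and v_nonneg: "\<And>t. t \<in> {0..thbar} \<Longrightarrow> 0 \<le> v t"
    and v_deriv: "\<And>t. t \<in> {0..thbar} \<Longrightarrow> (v has_real_derivative v' t) (at t within {0..thbar})"
    and v'_deriv: "\<And>t. t \<in> {0..thbar} \<Longrightarrow> (v' has_real_derivative v'' t) (at t within {0..thbar})"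
    and v''_cont: "continuous_on {0..thbar} v''"
    and v'_nonneg: "\<And>t. t \<in> {0..thbar} \<Longrightarrow> 0 \<le> v' t"
    and v''_nonpos: "\<And>t. t \<in> {0..thbar} \<Longrightarrow> v'' t \<le> 0"
  shows "F \<in> Sset thbar f F 0 \<and>
         (\<forall>th0 s. 0 \<le> th0 \<and> th0 < thbar \<and> s \<in> Sset thbar f F th0
              \<longrightarrow> WS thbar f v th0 s \<le> WS thbar f v 0 F)"
proof -
  have fint: "f integrable_on {0..thbar}" by (rule integrable_continuous_interval[OF f_cont])
  have Fcont: "continuous_on {0..thbar} F"
    using continuous_on_eq[OF indefinite_integral_continuous_1[OF fint]] F_def by auto
  have Fmono: "F x \<le> F y" if "0 \<le> x" "x \<le> y" "y \<le> thbar" for x y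
  proof -
    have fi: "f integrable_on {0..y}" using integrable_on_subinterval[OF fint] that by auto
    have "integral {0..x} f + integral {x..y} f = integral {0..y} f"
      by (rule Henstock_Kurzweil_Integration.integral_combine) (use that fi in auto)
    moreover have "0 \<le> integral {x..y} f"
      by (rule Henstock_Kurzweil_Integration.integral_nonneg)
         (use that integrable_on_subinterval[OF fint, of x y] f_pos in \<open>auto simp: less_imp_le\<close>)
    ultimately show ?thesis using F_def that by auto
  qed
  have F01: "0 \<le> F t \<and> F t \<le> 1" if "t \<in> {0..thbar}" for t
    using Fmono[of 0 t] Fmono[of t thbar] that F_def[of 0] F_top by auto
  have Fmeas: "F \<in> borel_measurable (lebesgue_on {a..thbar})" if "0 \<le> a" for a
    by (rule continuous_imp_measurable_on_sets_lebesgue)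
       (use continuous_on_subset[OF Fcont] that in auto)
  have Fbdd: "bounded (F ` {a..thbar})" if "0 \<le> a" for a
    unfolding bounded_iff using F01 that by (intro exI[of _ 1]) auto
  have part1: "F \<in> Sset thbar f F 0"
    unfolding Sset_def MPS_def using F01 Fmeas[of 0] Fbdd[of 0]
    by (auto intro!: mono_onI Fmono)
  obtain Mf where Mf: "\<And>t. t \<in> {0..thbar} \<Longrightarrow> \<bar>f t\<bar> \<le> Mf"
  proof -
    have "bounded (f ` {0..thbar})"
      by (rule compact_imp_bounded[OF compact_continuous_image[OF f_cont]]) simp
    then obtain B where "\<forall>y\<in>f ` {0..thbar}. norm y \<le> B" unfolding bounded_iff by blast
    then show ?thesis using that by (metis image_eqI real_norm_def)
  qed
  have vcont: "continuous_on {0..thbar} v"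
    using v_deriv DERIV_continuous continuous_on_eq_continuous_within by blast
  have part2: "WS thbar f v th0 s \<le> WS thbar f v 0 F"
    if th0: "0 \<le> th0" "th0 < thbar" and sS: "s \<in> Sset thbar f F th0" for th0 s
  proof -
    let ?a = th0 and ?b = thbar
    have sub: "{th0..thbar} \<subseteq> {0..thbar}" using th0 by auto
    from sS have smono: "mono_on {th0..thbar} s" and s01: "\<And>t. t \<in> {th0..thbar} \<Longrightarrow> 0 \<le> s t \<and> s t \<le> 1"
      and mps: "MPS thbar f th0 s F" unfolding Sset_def by auto
    from mps have sbdd: "bounded (s ` {th0..thbar})" and smeas: "s \<in> borel_measurable (lebesgue_on {th0..thbar})"
      and tailI: "\<And>x. x \<in> {th0..thbar} \<Longrightarrow> integral {x..thbar} (\<lambda>t. s t * f t) \<le> integral {x..thbar} (\<lambda>t. F t * f t)"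
      and totI: "integral {th0..thbar} (\<lambda>t. s t * f t) = integral {th0..thbar} (\<lambda>t. F t * f t)"
      unfolding MPS_def by auto
    have fc: "continuous_on {th0..thbar} f" using continuous_on_subset[OF f_cont sub] .
    have Fc: "continuous_on {th0..thbar} F" using continuous_on_subset[OF Fcont sub] .
    have sfi: "(\<lambda>t. s t * f t) integrable_on {th0..thbar}"
      using absolutely_integrable_bounded_measurable_product_real[OF smeas _ sbdd absolutely_integrable_continuous_real[OF fc]]
      by (simp add: absolutely_integrable_on_def)
    have tfc: "continuous_on {th0..thbar} (\<lambda>t. t * f t)" by (intro continuous_intros fc)
    have tsfi: "(\<lambda>t. t * (s t * f t)) integrable_on {th0..thbar}"
      using absolutely_integrable_bounded_measurable_product_real[OF smeas _ sbdd absolutely_integrable_continuous_real[OF tfc]]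
      by (simp add: absolutely_integrable_on_def algebra_simps)
    have Ffc: "continuous_on {0..thbar} (\<lambda>t. F t * f t)" by (intro continuous_intros Fcont f_cont)
    have tFfc: "continuous_on {0..thbar} (\<lambda>t. t * (F t * f t))" by (intro continuous_intros Fcont f_cont)
    have vfc: "continuous_on {0..thbar} (\<lambda>t. v t * f t)" by (intro continuous_intros vcont f_cont)
    have Ffi: "(\<lambda>t. F t * f t) integrable_on {th0..thbar}"
      by (rule integrable_continuous_interval) (rule continuous_on_subset[OF Ffc sub])
    have tFfi: "(\<lambda>t. t * (F t * f t)) integrable_on {th0..thbar}"
      by (rule integrable_continuous_interval) (rule continuous_on_subset[OF tFfc sub])
    have tFfi0: "(\<lambda>t. t * (F t * f t)) integrable_on {0..thbar}"
      by (rule integrable_continuous_interval[OF tFfc])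
    have vfi: "(\<lambda>t. v t * f t) integrable_on {th0..thbar}"
      by (rule integrable_continuous_interval) (rule continuous_on_subset[OF vfc sub])
    have vfi0: "(\<lambda>t. v t * f t) integrable_on {0..thbar}"
      by (rule integrable_continuous_interval[OF vfc])
    define h where "h t = s t * f t - F t * f t" for t
    have hint: "h integrable_on {th0..thbar}" unfolding h_def by (intro integrable_diff sfi Ffi)
    have thint: "(\<lambda>t. t * h t) integrable_on {th0..thbar}"
      using integrable_diff[OF tsfi tFfi] unfolding h_def by (simp add: algebra_simps)
    have hb: "\<bar>h t\<bar> \<le> Mf" if "t \<in> {th0..thbar}" for t
    proof -
      have "\<bar>s t - F t\<bar> \<le> 1" using s01[OF that] F01[of t] that th0 by auto
      then have "\<bar>s t - F t\<bar> * \<bar>f t\<bar> \<le> 1 * Mf"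
        using Mf[of t] that th0 by (intro mult_mono) auto
      then show ?thesis by (simp add: h_def abs_mult left_diff_distrib[symmetric])
    qed
    have tail: "integral {x..thbar} h \<le> 0" if "x \<in> {th0..thbar}" for x
    proof -
      have "integral {x..thbar} h = integral {x..thbar} (\<lambda>t. s t * f t) - integral {x..thbar} (\<lambda>t. F t * f t)"
        unfolding h_def
        by (rule integral_diff) (use that integrable_on_subinterval[OF sfi, of x thbar]
              integrable_on_subinterval[OF Ffi, of x thbar] in auto)
      then show ?thesis using tailI[OF that] by simp
    qed
    have tot: "integral {th0..thbar} h = 0"
      unfolding h_def using integral_diff[OF sfi Ffi] totI by simp
    have c: "integral {th0..thbar} (\<lambda>t. t * h t) \<le> 0"
      by (rule core[OF _ hint thint hb tail tot]) (use th0 in auto)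
    have "integral {th0..thbar} (\<lambda>t. t * h t) = integral {th0..thbar} (\<lambda>t. t * (s t * f t)) - integral {th0..thbar} (\<lambda>t. t * (F t * f t))"
      unfolding h_def using integral_diff[OF tsfi tFfi] by (simp add: algebra_simps)
    with c have k1: "integral {th0..thbar} (\<lambda>t. t * (s t * f t)) \<le> integral {th0..thbar} (\<lambda>t. t * (F t * f t))" by simp
    have k2: "integral {th0..thbar} (\<lambda>t. t * (F t * f t)) \<le> integral {0..thbar} (\<lambda>t. t * (F t * f t))"
      by (rule integral_subset_le[OF sub tFfi tFfi0]) (use F01 f_pos in \<open>auto simp: less_imp_le\<close>)
    have k3: "integral {th0..thbar} (\<lambda>t. v t * f t) \<le> integral {0..thbar} (\<lambda>t. v t * f t)"
      by (rule integral_subset_le[OF sub vfi vfi0]) (use v_nonneg f_pos in \<open>auto simp: less_imp_le\<close>)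
    have w1: "WS thbar f v th0 s = integral {th0..thbar} (\<lambda>t. t * (s t * f t)) + integral {th0..thbar} (\<lambda>t. v t * f t)"
      unfolding WS_def using integral_add[OF tsfi vfi] by (simp add: algebra_simps)
    have tFfi0': "(\<lambda>t. t * (F t * f t)) integrable_on {0..thbar}" by (rule tFfi0)
    have w2: "WS thbar f v 0 F = integral {0..thbar} (\<lambda>t. t * (F t * f t)) + integral {0..thbar} (\<lambda>t. v t * f t)"
      unfolding WS_def using integral_add[OF tFfi0 vfi0] by (simp add: algebra_simps)
    show ?thesis using w1 w2 k1 k2 k3 by linarith
  qed
  show ?thesis using part1 part2 by blast
qed

end
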